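(* Let $K\in\mathcal T_h^B$, let $j\ge0$ be an integer and $v\in P_j(K)$, extended as the same polynomial to the regions $M_e$, $e\subset\partial K\cap\partial\Omega_h$. Then $$\sum_{e\subset\partial K\cap\partial\Omega_h}\|v\|_{0,M_e}^2\lesssim h^{-1}s^2\|v\|_{0,K}^2,$$ with hidden constant independent of $h$, $s$ and $v$.
   Context: Let $\Omega\subset\mathbb R^2$ be a bounded convex domain with Lipschitz, possibly curved boundary $\partial\Omega$ and unit outward normal $\widetilde{\mathbf n}$. $\mathcal T_h$ is a partition into polygons which is body-fitted: each boundary edge has both endpoints on $\partial\Omega$; $\overline{\Omega_h}=\bigcup_{K\in\mathcal T_h}K$. $h_K$ = diameter of $K$, $h=\max_Kh_K$ (assumed $\le O(1)$); $\mathbf n$ denotes the unit outward normal on $\partial\Omega_h$. $\mathcal E_h^B$ is the set of boundary edges, $h_e$ the length of $e$, $s=\max_{e\in\mathcal E_h^B}h_e$ ($s\le h$). For $e\in\mathcal E_h^B$, $\tilde e\subset\partial\Omega$ is the arc between the endpoints of $e$ and $M_e$ the region bounded by $e$ and $\tilde e$. $\mathcal T_h^B$ = elements with at least one edge in $\mathcal E_h^B$. The meshes satisfy, with mesh-independent constants: (A1) each $K$ is star-shaped w.r.t. a ball $\mathcal B_K\subset K$ of radius $\rho_K\ge C_1h_K$; (A2) each $K$ has an edge with $h_e\ge C_2h_K$; (A3) $h\le C_3h_K$ for all $K$; (A4) for each $e\in\mathcal E_h^B$, in local Cartesian coordinates $(\hat x,\hat y)$ with $e=[0,h_e]\times\{0\}$,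 $\Gamma(\hat x,0)=(\hat x,\gamma(\hat x))$ is a bijection $e\to\tilde e$ with $\sup|\gamma|\le C_4s^2$ and $\sup_{\hat x}|\mathbf n(\hat x,0)-\widetilde{\mathbf n}(\hat x,\gamma(\hat x))|\le C_4's$; (A5) $s\le C_5\min_{e\in\mathcal E_h^B}h_e$; (A6) for each $e\in\mathcal E_h^B$ with element $K$, the triangle $P(e)$ with base $e$ and apex the center of $\mathcal B_K$ (height $h_{K,e}$), mapped by $\hat{\mathbf x}\mapsto\mathrm{diag}(h_e^{-1},h_{K,e}^{-1})\hat{\mathbf x}$ in coordinates with $e$ on the abscissa and the height on the ordinate, becomes a triangle of diameter $O(1)$ with circumradius/inradius ratio $\le C_6$; and each point of $K$ lies in at most $M$ triangles $P(e)$, $e\subset\partial K\cap\partial\Omega_h$. $x\lesssim y$ means $x\le Cy$ with $C$ independent of $h$, $s$ and the functions involved (it may depend on $j$ and the constants above). *)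

theory Defs
  imports "HOL-Analysis.Analysis"
begin

type_synonym pt = "real^2"

definition Pj :: "nat \<Rightarrow> (pt \<Rightarrow> real) set" where
  "Pj j = {v. \<exists>c :: nat \<Rightarrow> nat \<Rightarrow> real.
      \<forall>x. v x = (\<Sum>a\<le>j. \<Sum>b\<le>j - a. c a b * (x$1) ^ a * (x$2) ^ b)}"

definition L2sq :: "(pt \<Rightarrow> real) \<Rightarrow> pt set \<Rightarrow> real" where
  "L2sq v S = integral S (\<lambda>x. (v x)\<^sup>2)"

definition vtx :: "pt list \<Rightarrow> nat \<Rightarrow> pt" where
  "vtx vs i = vs ! (i mod length vs)"

definition edge :: "pt list \<Rightarrow> nat \<Rightarrow> pt set" where
  "edge vs i = closed_segment (vtx vs i) (vtx vs (Suc i))"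

definition edges :: "pt list \<Rightarrow> pt set set" where
  "edges vs = edge vs ` {..<length vs}"

definition pboundary :: "pt list \<Rightarrow> pt set" where
  "pboundary vs = \<Union>(edges vs)"

definition simple_polygon :: "pt list \<Rightarrow> bool" where
  "simple_polygon vs \<longleftrightarrow> length vs \<ge> 3 \<and> distinct vs \<and>
     (\<forall>i<length vs. \<forall>k<length vs. i \<noteq> k \<longrightarrow>
        edge vs i \<inter> edge vs k \<subseteq> {vtx vs i, vtx vs (Suc i)} \<inter> {vtx vs k, vtx vs (Suc k)})"

definition polyreg :: "pt list \<Rightarrow> pt set" where
  "polyreg vs = pboundary vs \<union> inside (pboundary vs)"

definition outward_edge_normal :: "pt set \<Rightarrow> pt \<Rightarrow> pt \<Rightarrow> pt \<Rightarrow> bool" where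
  "outward_edge_normal K a b n \<longleftrightarrow> norm n = 1 \<and> n \<bullet> (b - a) = 0 \<and>
     (\<exists>\<epsilon>>0. \<forall>t. 0 < t \<and> t < \<epsilon> \<longrightarrow> midpoint a b - t *\<^sub>R n \<in> K \<and> midpoint a b + t *\<^sub>R n \<notin> K)"

definition outward_normal :: "pt set \<Rightarrow> pt \<Rightarrow> pt \<Rightarrow> bool" where
  "outward_normal \<Omega> p nn \<longleftrightarrow> p \<in> frontier \<Omega> \<and> norm nn = 1 \<and> (\<forall>y\<in>\<Omega>. (y - p) \<bullet> nn \<le> 0)"

definition boundary_arc :: "pt set \<Rightarrow> pt \<Rightarrow> pt \<Rightarrow> pt set \<Rightarrow> bool" where
  "boundary_arc \<Omega> a b A \<longleftrightarrow> A \<subseteq> frontier \<Omega> \<and>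
     (\<exists>g. arc g \<and> pathstart g = a \<and> pathfinish g = b \<and> path_image g = A)"

definition bounded_region :: "pt set \<Rightarrow> pt set \<Rightarrow> pt set" where
  "bounded_region e A = e \<union> A \<union> inside (e \<union> A)"

definition cross2 :: "pt \<Rightarrow> pt \<Rightarrow> real" where
  "cross2 u w = u$1 * w$2 - u$2 * w$1"

definition tri_area :: "pt \<Rightarrow> pt \<Rightarrow> pt \<Rightarrow> real" where
  "tri_area p q r = \<bar>cross2 (q - p) (r - p)\<bar> / 2"

definition circumradius :: "pt \<Rightarrow> pt \<Rightarrow> pt \<Rightarrow> real" where
  "circumradius p q r = dist q r * dist p r * dist p q / (4 * tri_area p q r)"

definition inradius :: "pt \<Rightarrow> pt \<Rightarrow> pt \<Rightarrow> real" where
  "inradius p q r = 2 * tri_area p q r / (dist q r + dist p r + dist p q)"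

text \<open>Mesh data: domain Omega, finite set T of elements, vertex lists VL K,
  ball centres cB K and radii rB K (A1), and a choice of arc arcOf e of the
  boundary of Omega for every boundary edge e.\<close>

definition mesh_Omh :: "pt set set \<Rightarrow> pt set" where
  "mesh_Omh T = \<Union>T"

definition mesh_h :: "pt set set \<Rightarrow> real" where
  "mesh_h T = Max (diameter ` T)"

definition bedges_of :: "pt set set \<Rightarrow> pt list \<Rightarrow> pt set set" where
  "bedges_of T vs = {e \<in> edges vs. e \<subseteq> frontier (\<Union>T)}"

definition mesh_EB :: "pt set set \<Rightarrow> (pt set \<Rightarrow> pt list) \<Rightarrow> pt set set" where
  "mesh_EB T VL = (\<Union>K\<in>T. bedges_of T (VL K))"

definition mesh_s :: "pt set set \<Rightarrow> (pt set \<Rightarrow> pt list) \<Rightarrow> real" where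
  "mesh_s T VL = Max (diameter ` mesh_EB T VL)"

definition mesh_TB :: "pt set set \<Rightarrow> (pt set \<Rightarrow> pt list) \<Rightarrow> pt set set" where
  "mesh_TB T VL = {K \<in> T. bedges_of T (VL K) \<noteq> {}}"

definition admissible_mesh ::
  "real \<Rightarrow> real \<Rightarrow> real \<Rightarrow> real \<Rightarrow> real \<Rightarrow> real \<Rightarrow> real \<Rightarrow> nat \<Rightarrow> real \<Rightarrow>
   pt set \<Rightarrow> pt set set \<Rightarrow> (pt set \<Rightarrow> pt list) \<Rightarrow> (pt set \<Rightarrow> pt) \<Rightarrow> (pt set \<Rightarrow> real) \<Rightarrow>
   (pt set \<Rightarrow> pt set) \<Rightarrow> bool" where
  "admissible_mesh C1 C2 C3 C4 C4' C5 C6 M H0 \<Omega> T VL cB rB arcOf \<longleftrightarrow>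
    \<comment> \<open>Omega: bounded convex domain\<close>
    open \<Omega> \<and> \<Omega> \<noteq> {} \<and> convex \<Omega> \<and> bounded \<Omega> \<and>
    \<comment> \<open>partition into simple polygons with pairwise disjoint interiors\<close>
    finite T \<and> T \<noteq> {} \<and>
    (\<forall>K\<in>T. simple_polygon (VL K) \<and> K = polyreg (VL K)) \<and>
    (\<forall>K\<in>T. \<forall>K'\<in>T. K \<noteq> K' \<longrightarrow> interior K \<inter> interior K' = {}) \<and>
    \<comment> \<open>h = O(1)\<close>
    mesh_h T \<le> H0 \<and>
    \<comment> \<open>body-fitted: endpoints of boundary edges lie on the boundary of Omega\<close>
    (\<forall>K\<in>T. \<forall>i<length (VL K). edge (VL K) i \<subseteq> frontier (\<Union>T) \<longrightarrow>
        vtx (VL K) i \<in> frontier \<Omega> \<and> vtx (VL K) (Suc i) \<in> frontier \<Omega>) \<and>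
    \<comment> \<open>arcs: arcOf e is the arc of the boundary of Omega between the endpoints of e\<close>
    (\<forall>K\<in>T. \<forall>i<length (VL K). edge (VL K) i \<subseteq> frontier (\<Union>T) \<longrightarrow>
        boundary_arc \<Omega> (vtx (VL K) i) (vtx (VL K) (Suc i)) (arcOf (edge (VL K) i))) \<and>
    \<comment> \<open>(A1)\<close>
    (\<forall>K\<in>T. 0 < rB K \<and> rB K \<ge> C1 * diameter K \<and> ball (cB K) (rB K) \<subseteq> K \<and>
        (\<forall>x\<in>K. \<forall>y\<in>ball (cB K) (rB K). closed_segment x y \<subseteq> K)) \<and>
    \<comment> \<open>(A2)\<close>
    (\<forall>K\<in>T. \<exists>e\<in>edges (VL K). diameter e \<ge> C2 * diameter K) \<and>
    \<comment> \<open>(A3)\<close>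
    (\<forall>K\<in>T. mesh_h T \<le> C3 * diameter K) \<and>
    \<comment> \<open>(A4), written in global coordinates: local frame with origin a, abscissa direction
        tau = (b-a)/h_e and ordinate direction nu\<close>
    (\<forall>K\<in>T. \<forall>i<length (VL K). edge (VL K) i \<subseteq> frontier (\<Union>T) \<longrightarrow>
       (let a = vtx (VL K) i; b = vtx (VL K) (Suc i); he = dist a b;
            \<tau> = (1 / he) *\<^sub>R (b - a) in
        \<exists>\<nu> \<gamma> n. norm \<nu> = 1 \<and> \<nu> \<bullet> \<tau> = 0 \<and> outward_edge_normal K a b n \<and>
          bij_betw (\<lambda>t. a + t *\<^sub>R \<tau> + \<gamma> t *\<^sub>R \<nu>) {0..he} (arcOf (edge (VL K) i)) \<and>
          (\<forall>t\<in>{0..he}. \<bar>\<gamma> t\<bar> \<le> C4 * (mesh_s T VL)\<^sup>2) \<and>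
          (\<forall>t\<in>{0..he}. \<exists>nn. outward_normal \<Omega> (a + t *\<^sub>R \<tau> + \<gamma> t *\<^sub>R \<nu>) nn \<and>
                              norm (n - nn) \<le> C4' * mesh_s T VL))) \<and>
    \<comment> \<open>(A5)\<close>
    (\<forall>e\<in>mesh_EB T VL. mesh_s T VL \<le> C5 * diameter e) \<and>
    \<comment> \<open>(A6)\<close>
    (\<forall>K\<in>T. \<forall>i<length (VL K). edge (VL K) i \<subseteq> frontier (\<Union>T) \<longrightarrow>
       (let a = vtx (VL K) i; b = vtx (VL K) (Suc i); he = dist a b;
            \<tau> = (1 / he) *\<^sub>R (b - a); c = cB K;
            hKe = infdist c (affine hull {a, b});
            p = vector [0, 0] :: pt; q = vector [1, 0] :: pt;
            r = vector [((c - a) \<bullet> \<tau>) / he, 1] :: pt in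
        hKe > 0 \<and> diameter (convex hull {p, q, r}) \<le> C6 \<and>
        circumradius p q r / inradius p q r \<le> C6)) \<and>
    (\<forall>K\<in>T. \<forall>x\<in>K. card {i. i < length (VL K) \<and> edge (VL K) i \<subseteq> frontier (\<Union>T) \<and>
        x \<in> convex hull {vtx (VL K) i, vtx (VL K) (Suc i), cB K}} \<le> M)"

end

theory Submission
  imports Defs "HOL-Computational_Algebra.Polynomial"
begin


lemma lagrange_repr:
  fixes P :: "real poly" and tt :: "nat \<Rightarrow> real"
  assumes deg: "degree P \<le> j" and inj: "inj_on tt {..j}"
  shows "poly P y = (\<Sum>i\<le>j. poly P (tt i) / (\<Prod>k\<in>{..j}-{i}. (tt i - tt k)) * (\<Prod>k\<in>{..j}-{i}. (y - tt k)))"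
proof -
  define Q where "Q = (\<Sum>i\<le>j. smult (poly P (tt i) / (\<Prod>k\<in>{..j}-{i}. (tt i - tt k))) (\<Prod>k\<in>{..j}-{i}. [:- tt k, 1:]))"
  have polyQ: "poly Q x = (\<Sum>i\<le>j. poly P (tt i) / (\<Prod>k\<in>{..j}-{i}. (tt i - tt k)) * (\<Prod>k\<in>{..j}-{i}. (x - tt k)))" for x
    unfolding Q_def by (simp add: poly_sum poly_prod)
  have degQ: "degree Q \<le> j"
    unfolding Q_def
  proof (intro degree_sum_le)
    fix i assume "i \<in> {..j}"
    have "degree (\<Prod>k\<in>{..j}-{i}. [:- tt k, 1:]) \<le> sum (degree \<circ> (\<lambda>k. [:- tt k, 1:])) ({..j}-{i})"
      by (rule degree_prod_sum_le) simp
    also have "\<dots> = card ({..j}-{i})" by simp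
    also have "\<dots> \<le> j" using \<open>i \<in> {..j}\<close> by simp
    finally show "degree (smult (poly P (tt i) / (\<Prod>k\<in>{..j}-{i}. (tt i - tt k))) (\<Prod>k\<in>{..j}-{i}. [:- tt k, 1:])) \<le> j"
      by (meson degree_smult_le order_trans)
  qed simp
  have node: "poly Q (tt m) = poly P (tt m)" if m: "m \<le> j" for m
  proof -
    have "poly Q (tt m) = (\<Sum>i\<in>{m}. poly P (tt i) / (\<Prod>k\<in>{..j}-{i}. (tt i - tt k)) * (\<Prod>k\<in>{..j}-{i}. (tt m - tt k)))"
      unfolding polyQ
    proof (rule sum.mono_neutral_right)
      show "\<forall>i\<in>{..j} - {m}. poly P (tt i) / (\<Prod>k\<in>{..j}-{i}. (tt i - tt k)) * (\<Prod>k\<in>{..j}-{i}. (tt m - tt k)) = 0"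
      proof
        fix i assume "i \<in> {..j} - {m}"
        then have "m \<in> {..j}-{i}" using m by auto
        then have "(\<Prod>k\<in>{..j}-{i}. (tt m - tt k)) = 0"
          by (intro prod_zero) auto
        then show "poly P (tt i) / (\<Prod>k\<in>{..j}-{i}. (tt i - tt k)) * (\<Prod>k\<in>{..j}-{i}. (tt m - tt k)) = 0" by simp
      qed
    qed (use m in auto)
    also have "\<dots> = poly P (tt m)"
    proof -
      have "(\<Prod>k\<in>{..j}-{m}. (tt m - tt k)) \<noteq> 0"
        using inj m by (auto simp: inj_on_def)
      then show ?thesis by simp
    qed
    finally show ?thesis .
  qed
  have "P = Q"
  proof (rule poly_eqI_degree[of "tt ` {..j}"])
    show "\<And>x. x \<in> tt ` {..j} \<Longrightarrow> poly P x = poly Q x" using node by auto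
    have "card (tt ` {..j}) = Suc j" using inj by (simp add: card_image)
    then show "degree P < card (tt ` {..j})" "degree Q < card (tt ` {..j})" using deg degQ by auto
  qed
  then have "poly P y = poly Q y" by simp
  then show ?thesis unfolding polyQ .
qed

lemma poly1d_bound:
  fixes j :: nat and \<Lambda> :: real
  assumes L0: "0 \<le> \<Lambda>"
  shows "\<exists>C>0. \<forall>(d::nat\<Rightarrow>real) \<alpha> l y. 0 < l \<longrightarrow> \<bar>y - \<alpha>\<bar> \<le> \<Lambda>*l \<longrightarrow>
     (\<Sum>k\<le>j. d k * y^k)\<^sup>2 \<le> C/l * integral {\<alpha>..\<alpha>+l} (\<lambda>t. (\<Sum>k\<le>j. d k * t^k)\<^sup>2)"
proof -
  define B where "B = ((\<Lambda>+1)*(2*real j+2))^j"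
  define C where "C = (real j+1)^2 * B^2 * (2*real j+2)"
  have Bpos: "B > 0" unfolding B_def using L0 by simp
  have Cpos: "C > 0" unfolding C_def using Bpos by simp
  show ?thesis
  proof (intro exI[of _ C] conjI allI impI Cpos)
    fix d :: "nat \<Rightarrow> real" and \<alpha> l y :: real
    assume lpos: "0 < l" and yb: "\<bar>y - \<alpha>\<bar> \<le> \<Lambda>*l"
    define f where "f t = (\<Sum>k\<le>j. d k * t^k)" for t
    define g where "g = l/(2*real j+2)"
    define J where "J i = {\<alpha> + 2*real i*g .. \<alpha> + (2*real i+1)*g}" for i
    define I where "I = integral {\<alpha>..\<alpha>+l} (\<lambda>t. (f t)\<^sup>2)"
    have gpos: "g > 0" unfolding g_def using lpos by simp
    have lg: "l = (2*real j+2) * g" unfolding g_def by simp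
    have cont: "continuous_on S (\<lambda>t. (f t)\<^sup>2)" for S
      unfolding f_def by (intro continuous_intros)
    have "\<forall>i. \<exists>t. t \<in> J i \<and> (\<forall>s\<in>J i. (f t)\<^sup>2 \<le> (f s)\<^sup>2)"
    proof
      fix i
      have "\<exists>t\<in>J i. \<forall>s\<in>J i. (f t)\<^sup>2 \<le> (f s)\<^sup>2"
        by (rule continuous_attains_inf) (use gpos in \<open>auto simp: J_def cont\<close>)
      then show "\<exists>t. t \<in> J i \<and> (\<forall>s\<in>J i. (f t)\<^sup>2 \<le> (f s)\<^sup>2)" by blast
    qed
    then obtain tt where tt0: "\<forall>i. tt i \<in> J i \<and> (\<forall>s\<in>J i. (f (tt i))\<^sup>2 \<le> (f s)\<^sup>2)"
      using choice[of "\<lambda>i t. t \<in> J i \<and> (\<forall>s\<in>J i. (f t)\<^sup>2 \<le> (f s)\<^sup>2)"] by blast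
    have tt: "\<And>i. tt i \<in> J i" "\<And>i s. s \<in> J i \<Longrightarrow> (f (tt i))\<^sup>2 \<le> (f s)\<^sup>2"
      using tt0 by blast+
    have Jsub: "J i \<subseteq> {\<alpha>..\<alpha>+l}" if "i \<le> j" for i
    proof -
      have "(2*real i+1)*g \<le> (2*real j+2) * g" using that gpos by (intro mult_right_mono) auto
      moreover have "0 \<le> 2*real i*g" using gpos by simp
      ultimately show ?thesis unfolding J_def lg by auto
    qed
    have Inn: "0 \<le> I" unfolding I_def by (intro integral_nonneg integrable_continuous_real cont) auto
    have small: "(f (tt i))\<^sup>2 \<le> I/g" if "i \<le> j" for i
    proof -
      have "g * (f (tt i))\<^sup>2 = integral (J i) (\<lambda>_. (f (tt i))\<^sup>2)"
        unfolding J_def using gpos by (simp add: algebra_simps)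
      also have "\<dots> \<le> integral (J i) (\<lambda>t. (f t)\<^sup>2)"
        by (rule integral_le) (use tt(2) in \<open>auto simp: J_def intro!: integrable_continuous_real cont\<close>)
      also have "\<dots> \<le> I"
        unfolding I_def
        by (rule integral_subset_le) (use Jsub[OF that] in \<open>auto simp: J_def intro!: integrable_continuous_real cont\<close>)
      finally show ?thesis using gpos by (simp add: field_simps)
    qed
    have A: "\<alpha> + 2*(real m*g) \<le> tt m" "tt m \<le> \<alpha> + 2*(real m*g) + g" for m
      using tt(1)[of m] unfolding J_def by (auto simp: algebra_simps)
    have M: "real a * g + g \<le> real b * g" if "real a + 1 \<le> real b" for a b :: nat
      using mult_right_mono[OF that, of g] gpos by (simp add: algebra_simps)
    have sep: "g \<le> \<bar>tt i - tt k\<bar>" if "i \<noteq> k" for i k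
    proof (cases "i < k")
      case True
      then have "real i + 1 \<le> real k" by simp
      from M[OF this] have "g \<le> tt k - tt i" using A[of i] A[of k] by linarith
      then show ?thesis by linarith
    next
      case False
      then have "real k + 1 \<le> real i" using that by simp
      from M[OF this] have "g \<le> tt i - tt k" using A[of i] A[of k] by linarith
      then show ?thesis by linarith
    qed
    have near: "\<bar>y - tt k\<bar> \<le> (\<Lambda>+1)*l" if "k \<le> j" for k
    proof -
      have tk: "\<alpha> \<le> tt k" "tt k \<le> \<alpha> + l" using Jsub[OF that] tt(1)[of k] by auto
      have yb2: "-(\<Lambda>*l) \<le> y - \<alpha>" "y - \<alpha> \<le> \<Lambda>*l" using yb by linarith+
      have "-((\<Lambda>+1)*l) \<le> y - tt k" "y - tt k \<le> (\<Lambda>+1)*l"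
        unfolding distrib_right using tk yb2 by linarith+
      then show ?thesis by linarith
    qed
    have inj: "inj_on tt {..j}"
    proof (rule inj_onI)
      fix i k assume "tt i = tt k"
      then show "i = k" using sep[of i k] gpos by (cases "i = k") auto
    qed
    define P where "P = (\<Sum>k\<le>j. monom (d k) k)"
    have polyP: "poly P t = f t" for t unfolding P_def f_def by (simp add: poly_sum poly_monom)
    have degP: "degree P \<le> j" unfolding P_def
      by (intro degree_sum_le) (auto intro: order_trans[OF degree_monom_le])
    have rep: "f y = (\<Sum>i\<le>j. f (tt i) / (\<Prod>k\<in>{..j}-{i}. (tt i - tt k)) * (\<Prod>k\<in>{..j}-{i}. (y - tt k)))"
      using lagrange_repr[OF degP inj, of y] unfolding polyP .
    have trm: "\<bar>f (tt i) / (\<Prod>k\<in>{..j}-{i}. (tt i - tt k)) * (\<Prod>k\<in>{..j}-{i}. (y - tt k))\<bar> \<le> sqrt (I/g) * B"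
      if i: "i \<le> j" for i
    proof -
      have cardj: "card ({..j}-{i}) = j" using i by simp
      have num: "\<bar>\<Prod>k\<in>{..j}-{i}. (y - tt k)\<bar> \<le> ((\<Lambda>+1)*l)^j"
      proof -
        have "\<bar>\<Prod>k\<in>{..j}-{i}. (y - tt k)\<bar> = (\<Prod>k\<in>{..j}-{i}. \<bar>y - tt k\<bar>)" by (simp add: abs_prod)
        also have "\<dots> \<le> (\<Prod>k\<in>{..j}-{i}. (\<Lambda>+1)*l)" by (intro prod_mono) (auto intro: near)
        also have "\<dots> = ((\<Lambda>+1)*l)^j" using cardj by simp
        finally show ?thesis .
      qed
      have den: "g^j \<le> \<bar>\<Prod>k\<in>{..j}-{i}. (tt i - tt k)\<bar>"
      proof -
        have "g^j = (\<Prod>k\<in>{..j}-{i}. g)" using cardj by simp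
        also have "\<dots> \<le> (\<Prod>k\<in>{..j}-{i}. \<bar>tt i - tt k\<bar>)" by (intro prod_mono) (use gpos sep in auto)
        also have "\<dots> = \<bar>\<Prod>k\<in>{..j}-{i}. (tt i - tt k)\<bar>" by (simp add: abs_prod)
        finally show ?thesis .
      qed
      have gj: "g^j > 0" using gpos by simp
      have ratio: "\<bar>\<Prod>k\<in>{..j}-{i}. (y - tt k)\<bar> / \<bar>\<Prod>k\<in>{..j}-{i}. (tt i - tt k)\<bar> \<le> B"
      proof -
        have "\<bar>\<Prod>k\<in>{..j}-{i}. (y - tt k)\<bar> / \<bar>\<Prod>k\<in>{..j}-{i}. (tt i - tt k)\<bar> \<le> ((\<Lambda>+1)*l)^j / g^j"
          by (rule frac_le) (use num den gj in auto)
        also have "\<dots> = B" unfolding B_def lg using gpos by (simp add: power_divide[symmetric])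
        finally show ?thesis .
      qed
      have ft: "\<bar>f (tt i)\<bar> \<le> sqrt (I/g)"
        using small[OF i] by (metis real_le_rsqrt real_sqrt_abs real_sqrt_le_iff abs_ge_zero power2_abs)
      have "\<bar>f (tt i) / (\<Prod>k\<in>{..j}-{i}. (tt i - tt k)) * (\<Prod>k\<in>{..j}-{i}. (y - tt k))\<bar>
          = \<bar>f (tt i)\<bar> * (\<bar>\<Prod>k\<in>{..j}-{i}. (y - tt k)\<bar> / \<bar>\<Prod>k\<in>{..j}-{i}. (tt i - tt k)\<bar>)"
        by (simp add: abs_mult abs_divide)
      also have "\<dots> \<le> sqrt (I/g) * B"
        by (intro mult_mono ft ratio) (use Inn gpos in auto)
      finally show ?thesis .
    qed
    have "\<bar>f y\<bar> \<le> (\<Sum>i\<le>j. sqrt (I/g) * B)"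
      unfolding rep by (rule order_trans[OF sum_abs]) (intro sum_mono trm, simp)
    also have "\<dots> = (real j+1) * sqrt (I/g) * B" by simp
    finally have fy: "\<bar>f y\<bar> \<le> (real j+1) * sqrt (I/g) * B" .
    have "(f y)\<^sup>2 \<le> ((real j+1) * sqrt (I/g) * B)\<^sup>2"
      using fy by (metis abs_ge_zero power2_abs power_mono)
    also have "\<dots> = (real j+1)^2 * (I/g) * B^2"
      using Inn gpos by (simp add: power_mult_distrib)
    also have "\<dots> = C/l * I"
    proof -
      have Cl: "C = ((real j+1)^2*B^2/g) * l" unfolding C_def lg using gpos by (simp add: field_simps)
      then have e1: "C/l = (real j+1)^2*B^2/g" using lpos by simp
      have e2: "(real j+1)^2 * (I/g) * B^2 = ((real j+1)^2*B^2/g)*I" by simp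
      show ?thesis by (metis e1 e2)
    qed
    finally show "(\<Sum>k\<le>j. d k * y^k)\<^sup>2 \<le> C/l * integral {\<alpha>..\<alpha>+l} (\<lambda>t. (\<Sum>k\<le>j. d k * t^k)\<^sup>2)"
      unfolding f_def I_def by simp
  qed
qed



lemma Pj_sec1:
  assumes "v \<in> Pj j"
  shows "\<exists>d. \<forall>t. v (vector [t,u]) = (\<Sum>a\<le>j. d a * t^a)"
proof -
  obtain c where c: "\<And>x. v x = (\<Sum>a\<le>j. \<Sum>b\<le>j - a. c a b * (x$1) ^ a * (x$2) ^ b)"
    using assms unfolding Pj_def by blast
  show ?thesis
    by (rule exI[of _ "\<lambda>a. \<Sum>b\<le>j - a. c a b * u ^ b"])
       (simp add: c sum_distrib_left sum_distrib_right mult_ac)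
qed

lemma Pj_sec2:
  assumes "v \<in> Pj j"
  shows "\<exists>d. \<forall>u. v (vector [t,u]) = (\<Sum>b\<le>j. d b * u^b)"
proof -
  obtain c where c: "\<And>x. v x = (\<Sum>a\<le>j. \<Sum>b\<le>j - a. c a b * (x$1) ^ a * (x$2) ^ b)"
    using assms unfolding Pj_def by blast
  have eq: "(\<Sum>b\<le>j - a. F b) = (\<Sum>b\<le>j. if b \<le> j - a then F b else 0)" for a and F :: "nat \<Rightarrow> real"
  proof -
    have "{..j} \<inter> {b. b \<le> j - a} = {..j-a}" by auto
    then show ?thesis by (simp add: sum.If_cases)
  qed
  show ?thesis
  proof (rule exI[of _ "\<lambda>b. \<Sum>a\<le>j. if b \<le> j - a then c a b * t ^ a else 0"], rule allI)
    fix u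
    have "v (vector [t,u]) = (\<Sum>a\<le>j. \<Sum>b\<le>j. if b \<le> j - a then c a b * t ^ a * u ^ b else 0)"
      by (simp add: c eq)
    also have "\<dots> = (\<Sum>b\<le>j. \<Sum>a\<le>j. if b \<le> j - a then c a b * t ^ a * u ^ b else 0)"
      by (rule sum.swap)
    also have "\<dots> = (\<Sum>b\<le>j. (\<Sum>a\<le>j. if b \<le> j - a then c a b * t ^ a else 0) * u^b)"
      by (auto simp: sum_distrib_right intro!: sum.cong)
    finally show "v (vector [t,u]) = (\<Sum>b\<le>j. (\<Sum>a\<le>j. if b \<le> j - a then c a b * t ^ a else 0) * u^b)" .
  qed
qed

lemma Pj_cont:
  assumes "v \<in> Pj j"
  shows "continuous_on S v"
proof -
  obtain c where c: "\<And>x. v x = (\<Sum>a\<le>j. \<Sum>b\<le>j - a. c a b * (x$1) ^ a * (x$2) ^ b)"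
    using assms unfolding Pj_def by blast
  have "v = (\<lambda>x. \<Sum>a\<le>j. \<Sum>b\<le>j - a. c a b * (x$1) ^ a * (x$2) ^ b)" using c by auto
  then show ?thesis by (simp) (intro continuous_intros)
qed

lemma vec2_eta: "vector [x$1, x$2] = (x::real^2)"
  by (simp add: vec_eq_iff forall_2)

lemma vec2_axis: "(vector[t,u]::real^2) = t *\<^sub>R axis 1 1 + u *\<^sub>R axis 2 1"
  by (simp add: vec_eq_iff forall_2 axis_def)

lemma fubini2:
  fixes f :: "real^2 \<Rightarrow> real" and a b :: "real^2"
  assumes cf: "continuous_on UNIV f"
  shows "integral (cbox a b) f = integral {a$1..b$1} (\<lambda>t. integral {a$2..b$2} (\<lambda>u. f (vector[t,u])))"
proof -
  define g :: "real\<times>real \<Rightarrow> real^2" where "g p = vector[fst p, snd p]" for p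
  define h :: "real^2 \<Rightarrow> real\<times>real" where "h x = (x$1, x$2)" for x
  have hg: "h (g p) = p" for p by (simp add: g_def h_def)
  have gh: "g (h x) = x" for x by (simp add: g_def h_def vec2_eta)
  have memg: "x \<in> cbox (g u) (g v) \<longleftrightarrow> h x \<in> cbox u v" for x u v
    by (cases u; cases v) (auto simp add: cbox_Pair_eq mem_box_cart forall_2 g_def h_def cbox_interval less_eq_vec_def)
  have gimg: "x \<in> g ` S \<longleftrightarrow> h x \<in> S" for x S by (metis gh hg image_iff)
  have himg: "y \<in> h ` S \<longleftrightarrow> g y \<in> S" for y S by (metis gh hg image_iff)
  have gbox: "g ` cbox u v = cbox (g u) (g v)" for u v
  proof (rule set_eqI)
    fix x show "x \<in> g ` cbox u v \<longleftrightarrow> x \<in> cbox (g u) (g v)"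
      unfolding gimg memg ..
  qed
  have hbox: "h ` cbox w z = cbox (h w) (h z)" for w z
  proof (rule set_eqI)
    fix y
    show "y \<in> h ` cbox w z \<longleftrightarrow> y \<in> cbox (h w) (h z)"
      using memg[of "g y" "h w" "h z"] unfolding gh hg himg .
  qed
  have glin: "g p = fst p *\<^sub>R axis 1 1 + snd p *\<^sub>R axis 2 1" for p
    by (simp add: g_def vec_eq_iff forall_2 axis_def)
  have contg: "continuous (at x) g" for x
    unfolding glin[abs_def] by (intro continuous_intros)
  have cont_content: "Henstock_Kurzweil_Integration.content (g ` cbox u v) = 1 * Henstock_Kurzweil_Integration.content (cbox u v)" for u v
  proof (cases u; cases v)
    fix u1 u2 v1 v2 assume uv: "u = (u1,u2)" "v = (v1,v2)"
    have "Henstock_Kurzweil_Integration.content (g ` cbox u v) = Henstock_Kurzweil_Integration.content (cbox (vector[u1,u2]::real^2) (vector[v1,v2]))"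
      unfolding gbox uv by (simp add: g_def)
    also have "\<dots> = (if u1 \<le> v1 \<and> u2 \<le> v2 then (v1 - u1) * (v2 - u2) else 0)"
    proof -
      have "cbox (vector[u1,u2]::real^2) (vector[v1,v2]) = {} \<longleftrightarrow> \<not>(u1 \<le> v1 \<and> u2 \<le> v2)"
        using interval_ne_empty_cart(1)[of "vector[u1,u2]::real^2" "vector[v1,v2]"] by (simp add: forall_2) blast
      then show ?thesis by (simp add: content_cbox_if_cart UNIV_2)
    qed
    also have "\<dots> = Henstock_Kurzweil_Integration.content (cbox u v)"
      unfolding uv content_Pair by (simp add: cbox_interval content_real_if)
    finally show ?thesis by simp
  qed
  have intf: "(f has_integral integral (cbox a b) f) (cbox a b)"
    by (rule integrable_integral, rule integrable_continuous, rule continuous_on_subset[OF cf]) auto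
  have "((\<lambda>x. f (g x)) has_integral (1 / 1) *\<^sub>R integral (cbox a b) f) (h ` cbox a b)"
  proof (rule has_integral_twiddle[of 1 h g])
    show "\<exists>w z. g ` cbox u v = cbox w z" for u v using gbox by blast
    show "\<exists>w z. h ` cbox u v = cbox w z" for u v using hbox by blast
  qed (use hg gh contg cont_content intf in auto)
  then have "((\<lambda>x. f (g x)) has_integral integral (cbox a b) f) (cbox (a$1,a$2) (b$1,b$2))"
    unfolding hbox by (simp add: h_def)
  then have "integral (cbox a b) f = integral (cbox (a$1,a$2) (b$1,b$2)) (\<lambda>x. f (g x))"
    by (simp add: integral_unique)
  also have "\<dots> = integral (cbox (a$1) (b$1)) (\<lambda>x. integral (cbox (a$2) (b$2)) (\<lambda>y. f (g (x, y))))"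
    by (rule integral_prod_continuous)
       (intro continuous_on_compose2[OF cf] continuous_at_imp_continuous_on ballI contg, auto)
  also have "\<dots> = integral {a$1..b$1} (\<lambda>t. integral {a$2..b$2} (\<lambda>u. f (vector[t,u])))"
    by (simp add: cbox_interval g_def)
  finally show ?thesis .
qed


lemma poly2d_bound:
  fixes j :: nat and \<Lambda> :: real
  assumes L0: "0 \<le> \<Lambda>"
  shows "\<exists>C>0. \<forall>v\<in>Pj j. \<forall>(\<alpha>::real^2) l x. 0 < l \<longrightarrow> \<bar>x$1 - \<alpha>$1\<bar> \<le> \<Lambda>*l \<longrightarrow> \<bar>x$2 - \<alpha>$2\<bar> \<le> \<Lambda>*l \<longrightarrow>
          (v x)\<^sup>2 \<le> C/l\<^sup>2 * integral (cbox \<alpha> (vector[\<alpha>$1+l, \<alpha>$2+l])) (\<lambda>z. (v z)\<^sup>2)"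
proof -
  obtain C0 where C0: "C0>0" and H: "\<And>d \<alpha> l y. 0<l \<Longrightarrow> \<bar>y-\<alpha>\<bar> \<le> max \<Lambda> 1 * l \<Longrightarrow>
      (\<Sum>k\<le>j. d k*y^k)\<^sup>2 \<le> C0/l * integral {\<alpha>..\<alpha>+l} (\<lambda>t. (\<Sum>k\<le>j. d k*t^k)\<^sup>2)"
  proof -
    have "0 \<le> max \<Lambda> 1" by simp
    from poly1d_bound[OF this, of j] obtain C0 where "C0 > 0" and H0: "\<forall>(d::nat\<Rightarrow>real) \<alpha> l y. 0 < l \<longrightarrow> \<bar>y - \<alpha>\<bar> \<le> max \<Lambda> 1*l \<longrightarrow>
     (\<Sum>k\<le>j. d k * y^k)\<^sup>2 \<le> C0/l * integral {\<alpha>..\<alpha>+l} (\<lambda>t. (\<Sum>k\<le>j. d k * t^k)\<^sup>2)"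
      by blast
    then show ?thesis using that by blast
  qed
  show ?thesis
  proof (intro exI[of _ "C0^2"] conjI ballI allI impI)
    show "C0^2>0" using C0 by simp
    fix v and \<alpha> :: "real^2" and l :: real and x :: "real^2"
    assume v: "v \<in> Pj j" and l: "0<l" and x1: "\<bar>x$1 - \<alpha>$1\<bar> \<le> \<Lambda>*l" and x2: "\<bar>x$2 - \<alpha>$2\<bar> \<le> \<Lambda>*l"
    define F where "F t u = (v (vector[t,u]))\<^sup>2" for t u
    have contv: "continuous_on UNIV v" by (rule Pj_cont[OF v])
    have contv2: "continuous_on UNIV (\<lambda>z. (v z)\<^sup>2)"
      by (intro continuous_intros contv)
    have contF: "continuous_on S (\<lambda>p. F (fst p) (snd p))" for S
      unfolding F_def
      unfolding vec2_axis by (rule continuous_on_compose2[OF contv2]) (auto intro!: continuous_intros)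
    have contF1: "continuous_on S (\<lambda>t. F t u)" for S u
      unfolding F_def
      unfolding vec2_axis by (rule continuous_on_compose2[OF contv2]) (auto intro!: continuous_intros)
    have contF2: "continuous_on S (\<lambda>u. F t u)" for S t
      unfolding F_def
      unfolding vec2_axis by (rule continuous_on_compose2[OF contv2]) (auto intro!: continuous_intros)
    have mx: "\<Lambda>*l \<le> max \<Lambda> 1 * l" using l by (intro mult_right_mono) auto
    have s1: "(v x)\<^sup>2 \<le> C0/l * integral {\<alpha>$1..\<alpha>$1+l} (\<lambda>t. F t (x$2))"
    proof -
      obtain d where d: "\<And>t. v (vector[t,x$2]) = (\<Sum>a\<le>j. d a * t^a)"
        using Pj_sec1[OF v, of "x$2"] by blast
      have "(v x)\<^sup>2 = (\<Sum>a\<le>j. d a * (x$1)^a)\<^sup>2" using d[of "x$1"] by (simp add: vec2_eta)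
      also have "\<dots> \<le> C0/l * integral {\<alpha>$1..\<alpha>$1+l} (\<lambda>t. (\<Sum>k\<le>j. d k*t^k)\<^sup>2)"
        by (rule H) (use l order_trans[OF x1 mx] in auto)
      also have "\<dots> = C0/l * integral {\<alpha>$1..\<alpha>$1+l} (\<lambda>t. F t (x$2))"
        unfolding F_def d ..
      finally show ?thesis .
    qed
    have s2: "F t (x$2) \<le> C0/l * integral {\<alpha>$2..\<alpha>$2+l} (\<lambda>u. F t u)" for t
    proof -
      obtain d where d: "\<And>u. v (vector[t,u]) = (\<Sum>b\<le>j. d b * u^b)"
        using Pj_sec2[OF v, of t] by blast
      have "F t (x$2) = (\<Sum>b\<le>j. d b * (x$2)^b)\<^sup>2" unfolding F_def d ..
      also have "\<dots> \<le> C0/l * integral {\<alpha>$2..\<alpha>$2+l} (\<lambda>u. (\<Sum>k\<le>j. d k*u^k)\<^sup>2)"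
        by (rule H) (use l order_trans[OF x2 mx] in auto)
      also have "\<dots> = C0/l * integral {\<alpha>$2..\<alpha>$2+l} (\<lambda>u. F t u)"
        unfolding F_def d ..
      finally show ?thesis .
    qed
    have inner_int: "(\<lambda>t. integral {\<alpha>$2..\<alpha>$2+l} (\<lambda>u. F t u)) integrable_on {\<alpha>$1..\<alpha>$1+l}"
      using integral_integrable_2dim[OF contF, where a="\<alpha>$1" and c="\<alpha>$2" and b="\<alpha>$1+l" and d="\<alpha>$2+l"]
      by (simp add: cbox_interval)
    have s3: "integral {\<alpha>$1..\<alpha>$1+l} (\<lambda>t. F t (x$2)) \<le> integral {\<alpha>$1..\<alpha>$1+l} (\<lambda>t. C0/l * integral {\<alpha>$2..\<alpha>$2+l} (\<lambda>u. F t u))"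
    proof (rule integral_le)
      show "(\<lambda>t. F t (x$2)) integrable_on {\<alpha>$1..\<alpha>$1+l}" by (rule integrable_continuous_real[OF contF1])
      show "(\<lambda>t. C0/l * integral {\<alpha>$2..\<alpha>$2+l} (\<lambda>u. F t u)) integrable_on {\<alpha>$1..\<alpha>$1+l}"
        using integrable_on_cmult_left[OF inner_int, of "C0/l"] by simp
      show "\<And>t. t \<in> {\<alpha>$1..\<alpha>$1+l} \<Longrightarrow> F t (x$2) \<le> C0/l * integral {\<alpha>$2..\<alpha>$2+l} (\<lambda>u. F t u)"
        using s2 by blast
    qed
    also have "\<dots> = C0/l * integral {\<alpha>$1..\<alpha>$1+l} (\<lambda>t. integral {\<alpha>$2..\<alpha>$2+l} (\<lambda>u. F t u))"
      by (rule integral_mult_right)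
    also have "integral {\<alpha>$1..\<alpha>$1+l} (\<lambda>t. integral {\<alpha>$2..\<alpha>$2+l} (\<lambda>u. F t u)) = integral (cbox \<alpha> (vector[\<alpha>$1+l, \<alpha>$2+l])) (\<lambda>z. (v z)\<^sup>2)"
      using fubini2[OF contv2, of \<alpha> "vector[\<alpha>$1+l, \<alpha>$2+l]"] by (simp add: F_def)
    finally have s4: "integral {\<alpha>$1..\<alpha>$1+l} (\<lambda>t. F t (x$2)) \<le> C0/l * integral (cbox \<alpha> (vector[\<alpha>$1+l, \<alpha>$2+l])) (\<lambda>z. (v z)\<^sup>2)" .
    have "(v x)\<^sup>2 \<le> C0/l * (C0/l * integral (cbox \<alpha> (vector[\<alpha>$1+l, \<alpha>$2+l])) (\<lambda>z. (v z)\<^sup>2))"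
      using s1 s4 C0 l by (meson order_trans mult_left_mono divide_nonneg_pos less_imp_le)
    also have "\<dots> = C0^2/l\<^sup>2 * integral (cbox \<alpha> (vector[\<alpha>$1+l, \<alpha>$2+l])) (\<lambda>z. (v z)\<^sup>2)"
      by (simp add: power2_eq_square)
    finally show "(v x)\<^sup>2 \<le> C0^2/l\<^sup>2 * integral (cbox \<alpha> (vector[\<alpha>$1+l, \<alpha>$2+l])) (\<lambda>z. (v z)\<^sup>2)" .
  qed
qed




lemma integrable_compact_cont:
  fixes f :: "real^2 \<Rightarrow> real"
  assumes cf: "continuous_on UNIV f" and S: "compact S"
  shows "f integrable_on S"
proof -
  have "compact (f ` S)" by (rule compact_continuous_image[OF continuous_on_subset[OF cf] S]) auto
  then have "bounded (f ` S)" by (rule compact_imp_bounded)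
  then obtain B where B0: "\<forall>y\<in>f ` S. norm y \<le> B" unfolding bounded_iff by blast
  have B: "\<bar>f x\<bar> \<le> B" if "x \<in> S" for x using B0 that by auto
  have Sl: "S \<in> lmeasurable" by (rule lmeasurable_compact[OF S])
  show ?thesis
  proof (rule measurable_bounded_by_integrable_imp_integrable_real)
    show "f \<in> borel_measurable (lebesgue_on S)"
      by (rule continuous_imp_measurable_on_sets_lebesgue[OF continuous_on_subset[OF cf]]) (use Sl in auto)
    show "(\<lambda>x. B) integrable_on S" by (rule integrable_on_const[OF Sl])
    show "\<And>x. x \<in> S \<Longrightarrow> \<bar>f x\<bar> \<le> B" by (rule B)
    show "S \<in> sets lebesgue" using Sl by auto
  qed
qed

lemma strip_box:
  fixes a b \<nu> :: "real^2" and \<delta> :: real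
  assumes nu: "norm \<nu> = 1" and orth: "\<nu> \<bullet> ((1/dist a b) *\<^sub>R (b - a)) = 0" and d0: "0 \<le> \<delta>"
  defines "\<tau> \<equiv> (1/dist a b) *\<^sub>R (b-a)"
  defines "R \<equiv> (\<lambda>p::real^2. a + (p$1) *\<^sub>R \<tau> + (p$2) *\<^sub>R \<nu>) ` cbox (vector[0,-\<delta>]) (vector[dist a b, \<delta>])"
  shows "compact R" "convex R"
    "\<And>t u. t \<in> {0..dist a b} \<Longrightarrow> \<bar>u\<bar> \<le> \<delta> \<Longrightarrow> a + t *\<^sub>R \<tau> + u *\<^sub>R \<nu> \<in> R"
    "closed_segment a b \<subseteq> R"
    "\<And>x. x \<in> R \<Longrightarrow> norm (x - a) \<le> dist a b + \<delta>"
    "measure lebesgue R \<le> 2*\<delta>*dist a b"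
proof -
  define he where "he = dist a b"
  define L where "L p = (p$1) *\<^sub>R \<tau> + (p$2) *\<^sub>R \<nu>" for p :: "real^2"
  define S where "S = cbox (vector[0,-\<delta>]) (vector[he, \<delta>] :: real^2)"
  have he0: "0 \<le> he" unfolding he_def by simp
  have RL: "R = (+) a ` (L ` S)" unfolding R_def L_def S_def he_def image_image by (simp add: add.assoc)
  have linL: "linear L" unfolding L_def by (auto simp: linear_iff algebra_simps)
  have memS: "vector[t,u] \<in> S \<longleftrightarrow> t \<in> {0..he} \<and> \<bar>u\<bar> \<le> \<delta>" for t u
    unfolding S_def mem_box_cart forall_2 by auto
  have normtau: "norm \<tau> \<le> 1"
  proof (cases "a = b")
    case True then show ?thesis by (simp add: \<tau>_def)
  next
    case False then show ?thesis by (simp add: \<tau>_def dist_norm norm_minus_commute)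
  qed
  have contF: "continuous_on UNIV (\<lambda>p::real^2. a + (p$1) *\<^sub>R \<tau> + (p$2) *\<^sub>R \<nu>)"
    by (intro continuous_intros)
  show "compact R" unfolding R_def by (rule compact_continuous_image[OF continuous_on_subset[OF contF]]) auto
  show "convex R" unfolding RL by (intro convex_translation convex_linear_image linL) (simp add: S_def)
  show mem: "a + t *\<^sub>R \<tau> + u *\<^sub>R \<nu> \<in> R" if "t \<in> {0..dist a b}" "\<bar>u\<bar> \<le> \<delta>" for t u
  proof -
    have "vector[t,u] \<in> S" using that memS he_def by auto
    then have "a + ((vector[t,u]::real^2)$1) *\<^sub>R \<tau> + ((vector[t,u]::real^2)$2) *\<^sub>R \<nu> \<in> R"
      unfolding R_def S_def he_def by blast
    then show ?thesis by simp
  qed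
  show "closed_segment a b \<subseteq> R"
  proof
    fix x assume "x \<in> closed_segment a b"
    then obtain s where s: "0 \<le> s" "s \<le> 1" "x = (1 - s) *\<^sub>R a + s *\<^sub>R b"
      unfolding closed_segment_def by blast
    show "x \<in> R"
    proof (cases "a = b")
      case True
      then have "x = a + 0 *\<^sub>R \<tau> + 0 *\<^sub>R \<nu>" using s by (simp add: algebra_simps)
      then show ?thesis using mem[of 0 0] d0 by simp
    next
      case False
      then have hp: "dist a b > 0" by simp
      have "x = a + (s * dist a b) *\<^sub>R \<tau> + 0 *\<^sub>R \<nu>"
        using s hp by (simp add: \<tau>_def algebra_simps)
      moreover have "s * dist a b \<in> {0..dist a b}" using s hp by (auto simp: mult_le_cancel_right1)
      ultimately show ?thesis using mem[of "s * dist a b" 0] d0 by simp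
    qed
  qed
  show "norm (x - a) \<le> dist a b + \<delta>" if xR: "x \<in> R" for x
  proof -
    obtain p where p: "p \<in> S" "x = a + (p$1) *\<^sub>R \<tau> + (p$2) *\<^sub>R \<nu>"
      using xR unfolding R_def S_def he_def by blast
    have p1: "0 \<le> p$1" "p$1 \<le> he" and p2: "\<bar>p$2\<bar> \<le> \<delta>"
      using p(1) unfolding S_def mem_box_cart forall_2 by auto
    have "norm (x - a) = norm ((p$1) *\<^sub>R \<tau> + (p$2) *\<^sub>R \<nu>)" using p(2) by simp
    also have "\<dots> \<le> \<bar>p$1\<bar> * norm \<tau> + \<bar>p$2\<bar> * norm \<nu>"
      by (metis norm_scaleR norm_triangle_ineq)
    also have "\<dots> \<le> he * 1 + \<delta> * 1"
      using p1 p2 normtau nu by (intro add_mono mult_mono) auto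
    finally show ?thesis by (simp add: he_def)
  qed
  show "measure lebesgue R \<le> 2*\<delta>*dist a b"
  proof -
    have Sl: "S \<in> lmeasurable" by (simp add: S_def)
    have mS: "measure lebesgue S = 2*\<delta>*he"
    proof -
      have "measure lebesgue S = integral S (\<lambda>x. 1::real)" by (rule lmeasure_integral[OF Sl])
      also have "\<dots> = Henstock_Kurzweil_Integration.content S" by (simp add: S_def)
      also have "\<dots> = 2*\<delta>*he"
        unfolding S_def using he0 d0 by (simp add: content_cbox_cart interval_ne_empty_cart forall_2 UNIV_2)
      finally show ?thesis .
    qed
    have detL: "det (matrix L) = \<tau>$1 * \<nu>$2 - \<tau>$2 * \<nu>$1"
      by (simp add: det_2 matrix_def L_def axis_def)
    have n2: "(\<nu>$1)\<^sup>2 + (\<nu>$2)\<^sup>2 = 1"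
      using nu unfolding norm_vec_def L2_set_def by (simp add: sum_2)
    have t2: "(\<tau>$1)\<^sup>2 + (\<tau>$2)\<^sup>2 \<le> 1"
      using normtau unfolding norm_vec_def L2_set_def by (simp add: sum_2)
    have ident: "(\<tau>$1 * \<nu>$2 - \<tau>$2 * \<nu>$1)\<^sup>2 + (\<tau>$1 * \<nu>$1 + \<tau>$2 * \<nu>$2)\<^sup>2 = ((\<tau>$1)\<^sup>2 + (\<tau>$2)\<^sup>2) * ((\<nu>$1)\<^sup>2 + (\<nu>$2)\<^sup>2)"
      by (simp add: power2_eq_square algebra_simps)
    have "(\<tau>$1 * \<nu>$2 - \<tau>$2 * \<nu>$1)\<^sup>2 \<le> 1"
    proof -
      have "(\<tau>$1 * \<nu>$2 - \<tau>$2 * \<nu>$1)\<^sup>2 = ((\<tau>$1)\<^sup>2 + (\<tau>$2)\<^sup>2) - (\<tau>$1 * \<nu>$1 + \<tau>$2 * \<nu>$2)\<^sup>2"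
        using ident n2 by simp
      moreover have "0 \<le> (\<tau>$1 * \<nu>$1 + \<tau>$2 * \<nu>$2)\<^sup>2" by simp
      ultimately show ?thesis using t2 by linarith
    qed
    then have d1: "\<bar>det (matrix L)\<bar> \<le> 1" unfolding detL by (simp add: abs_square_le_1)
    have "measure lebesgue R = measure lebesgue (L ` S)" unfolding RL by (rule measure_translation)
    also have "\<dots> = \<bar>det (matrix L)\<bar> * measure lebesgue S" by (rule measure_linear_image[OF linL Sl])
    also have "\<dots> \<le> 1 * measure lebesgue S" by (rule mult_right_mono[OF d1]) simp
    finally show ?thesis using mS he_def by simp
  qed
qed







lemma polyreg_compact: "compact (polyreg vs)"
proof -
  have fin: "finite (edges vs)" unfolding edges_def by simp
  have "compact (pboundary vs)" unfolding pboundary_def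
    by (rule compact_Union[OF fin]) (auto simp: edges_def edge_def)
  then have cb: "closed (pboundary vs)" "bounded (pboundary vs)"
    by (auto simp: compact_imp_closed compact_imp_bounded)
  have "closed (polyreg vs)" unfolding polyreg_def union_with_inside
    using open_outside[OF cb(1)] by (simp add: closed_def)
  moreover have "bounded (polyreg vs)" unfolding polyreg_def
    using cb(2) bounded_inside by (simp add: bounded_Un)
  ultimately show ?thesis by (simp add: compact_eq_bounded_closed)
qed

lemma edge_sub_polyreg: "i < length vs \<Longrightarrow> edge vs i \<subseteq> polyreg vs"
  unfolding polyreg_def pboundary_def edges_def by auto

lemma vtx_in_polyreg:
  assumes "i < length vs"
  shows "vtx vs i \<in> polyreg vs" "vtx vs (Suc i) \<in> polyreg vs"
  using edge_sub_polyreg[OF assms] unfolding edge_def by auto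

lemma edge_bound:
  fixes v :: "real^2 \<Rightarrow> real" and a b \<nu> c :: "real^2" and A :: "(real^2) set"
  assumes v: "v \<in> Pj j"
   and Kc: "compact K" and aK: "a \<in> K" and cK: "c \<in> K"
   and nu: "norm \<nu> = 1" and orth: "\<nu> \<bullet> ((1/dist a b) *\<^sub>R (b - a)) = 0"
   and bij: "bij_betw (\<lambda>t. a + t *\<^sub>R ((1/dist a b) *\<^sub>R (b - a)) + \<gamma> t *\<^sub>R \<nu>) {0..dist a b} A"
   and gam: "\<forall>t\<in>{0..dist a b}. \<bar>\<gamma> t\<bar> \<le> \<delta>" and d0: "0 \<le> \<delta>"
   and hab: "dist a b \<le> hK" and hac: "dist a c \<le> hK" and dE: "\<delta> \<le> E * hK"
   and pw: "\<And>x. norm (x - c) \<le> (2 + E) * hK \<Longrightarrow> (v x)\<^sup>2 \<le> Sb"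
   and Sb0: "0 \<le> Sb"
  shows "integral (bounded_region (closed_segment a b) A) (\<lambda>x. (v x)\<^sup>2) \<le> Sb * (2*\<delta>*dist a b)"
proof -
  define \<tau> where "\<tau> = (1/dist a b) *\<^sub>R (b-a)"
  define R where "R = (\<lambda>p::real^2. a + (p$1) *\<^sub>R \<tau> + (p$2) *\<^sub>R \<nu>) ` cbox (vector[0,-\<delta>]) (vector[dist a b, \<delta>])"
  note SB = strip_box[OF nu orth d0, folded \<tau>_def, folded R_def]
  have Asub: "A \<subseteq> R"
  proof
    fix y assume "y \<in> A"
    then obtain t where t: "t \<in> {0..dist a b}" "y = a + t *\<^sub>R \<tau> + \<gamma> t *\<^sub>R \<nu>"
      using bij unfolding bij_betw_def \<tau>_def by auto
    show "y \<in> R" using SB(3)[OF t(1)] gam t by auto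
  qed
  have esub: "closed_segment a b \<subseteq> R" by (rule SB(4))
  have Msub: "bounded_region (closed_segment a b) A \<subseteq> R"
  proof -
    have "closed_segment a b \<union> A \<subseteq> R" using Asub esub by auto
    moreover have "inside (closed_segment a b \<union> A) - R \<subseteq> inside R"
      by (rule inside_mono) (use Asub esub in auto)
    moreover have "inside R = {}" by (rule inside_convex[OF SB(2)])
    ultimately show ?thesis unfolding bounded_region_def by auto
  qed
  have contv2: "continuous_on UNIV (\<lambda>x. (v x)\<^sup>2)" by (intro continuous_intros Pj_cont[OF v])
  have intR: "(\<lambda>x. (v x)\<^sup>2) integrable_on R" by (rule integrable_compact_cont[OF contv2 SB(1)])
  have Rl: "R \<in> lmeasurable" by (rule lmeasurable_compact[OF SB(1)])
  have ptR: "(v x)\<^sup>2 \<le> Sb" if "x \<in> R" for x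
  proof (rule pw)
    have "norm (x - c) \<le> norm (x - a) + norm (a - c)" using norm_triangle_ineq[of "x - a" "a - c"] by simp
    also have "\<dots> \<le> (dist a b + \<delta>) + hK" using SB(5)[OF that] hac by (simp add: dist_norm add_mono)
    also have "\<dots> \<le> (2 + E) * hK" using hab dE by (simp add: algebra_simps)
    finally show "norm (x - c) \<le> (2 + E) * hK" .
  qed
  have "integral R (\<lambda>x. (v x)\<^sup>2) \<le> integral R (\<lambda>x. Sb)"
    by (rule integral_le[OF intR integrable_on_const[OF Rl]]) (use ptR in auto)
  also have "\<dots> = integral R (\<lambda>x. Sb * 1)" by simp
  also have "\<dots> = Sb * integral R (\<lambda>x. 1)" by (rule integral_mult_right)
  also have "\<dots> = Sb * measure lebesgue R" using lmeasure_integral[OF Rl] by simp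
  also have "\<dots> \<le> Sb * (2*\<delta>*dist a b)" by (rule mult_left_mono[OF SB(6) Sb0])
  finally have IR: "integral R (\<lambda>x. (v x)\<^sup>2) \<le> Sb * (2*\<delta>*dist a b)" .
  show ?thesis
  proof (cases "(\<lambda>x. (v x)\<^sup>2) integrable_on bounded_region (closed_segment a b) A")
    case True
    have "integral (bounded_region (closed_segment a b) A) (\<lambda>x. (v x)\<^sup>2) \<le> integral R (\<lambda>x. (v x)\<^sup>2)"
      by (rule integral_subset_le[OF Msub True intR]) simp
    then show ?thesis using IR by linarith
  next
    case False
    then have "integral (bounded_region (closed_segment a b) A) (\<lambda>x. (v x)\<^sup>2) = 0"
      by (rule not_integrable_integral)
    moreover have "0 \<le> Sb * (2*\<delta>*dist a b)" using Sb0 d0 by simp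
    ultimately show ?thesis by simp
  qed
qed

theorem lemma2p6:
  fixes j :: nat and C1 C2 C3 C4 C4' C5 C6 H0 :: real and M :: nat
  assumes "0 < C1" "0 < C2" "0 < C3" "0 < C4" "0 < C4'" "0 < C5" "0 < C6" "0 < H0"
  shows "\<exists>C. \<forall>\<Omega> T VL cB rB arcOf K v.
           admissible_mesh C1 C2 C3 C4 C4' C5 C6 M H0 \<Omega> T VL cB rB arcOf \<longrightarrow>
           K \<in> mesh_TB T VL \<longrightarrow> v \<in> Pj j \<longrightarrow>
           (\<Sum>e\<in>bedges_of T (VL K). L2sq v (bounded_region e (arcOf e)))
             \<le> C * (mesh_s T VL)\<^sup>2 / mesh_h T * L2sq v K"
proof -
  have C1p: "0 < C1" and C3p: "0 < C3" and C4p: "0 < C4" and C5p: "0 < C5" and H0p: "0 < H0"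
    using assms by auto
  define E where "E = C4 * C5^2 * H0"
  define D where "D = 2 + E"
  define \<Lambda> where "\<Lambda> = 2*D/C1 + 1"
  have E0: "0 \<le> E" unfolding E_def using C4p H0p by simp
  have D0: "0 < D" unfolding D_def using E0 by simp
  have L0: "0 \<le> \<Lambda>" unfolding \<Lambda>_def using D0 C1p by simp
  obtain Cp where Cp: "Cp > 0" and HP0: "\<forall>v\<in>Pj j. \<forall>(\<alpha>::real^2) l x. 0 < l \<longrightarrow> \<bar>x$1 - \<alpha>$1\<bar> \<le> \<Lambda>*l \<longrightarrow> \<bar>x$2 - \<alpha>$2\<bar> \<le> \<Lambda>*l \<longrightarrow>
          (v x)\<^sup>2 \<le> Cp/l\<^sup>2 * integral (cbox \<alpha> (vector[\<alpha>$1+l, \<alpha>$2+l])) (\<lambda>z. (v z)\<^sup>2)"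
    using poly2d_bound[OF L0, of j] by blast
  define Cf where "Cf = real M * 8 * C4 * Cp * C3 / C1\<^sup>2"
  show ?thesis
  proof (intro exI[of _ Cf] allI impI)
    fix \<Omega> T VL cB rB arcOf K v
    assume adm: "admissible_mesh C1 C2 C3 C4 C4' C5 C6 M H0 \<Omega> T VL cB rB arcOf"
      and KTB: "K \<in> mesh_TB T VL" and v: "v \<in> Pj j"
    have KT: "K \<in> T" and bne: "bedges_of T (VL K) \<noteq> {}" using KTB by (auto simp: mesh_TB_def)
    define vs where "vs = VL K"
    define c where "c = cB K"
    define r where "r = rB K"
    define hK where "hK = diameter K"
    define h where "h = mesh_h T"
    define s where "s = mesh_s T VL"
    have F1: "finite T"
      using adm unfolding admissible_mesh_def by (elim conjE) assumption
    have F2: "\<forall>K\<in>T. simple_polygon (VL K) \<and> K = polyreg (VL K)"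
      using adm unfolding admissible_mesh_def by (elim conjE) assumption
    have F3: "\<forall>K\<in>T. 0 < rB K \<and> rB K \<ge> C1 * diameter K \<and> ball (cB K) (rB K) \<subseteq> K \<and>
        (\<forall>x\<in>K. \<forall>y\<in>ball (cB K) (rB K). closed_segment x y \<subseteq> K)"
      using adm unfolding admissible_mesh_def by (elim conjE) assumption
    have F4: "\<forall>K\<in>T. mesh_h T \<le> C3 * diameter K"
      using adm unfolding admissible_mesh_def by (elim conjE) assumption
    have F5: "mesh_h T \<le> H0"
      using adm unfolding admissible_mesh_def by (elim conjE) assumption
    have F6: "\<forall>e\<in>mesh_EB T VL. mesh_s T VL \<le> C5 * diameter e"
      using adm unfolding admissible_mesh_def by (elim conjE) assumption
    have F7: "\<forall>K\<in>T. \<forall>x\<in>K. card {i. i < length (VL K) \<and> edge (VL K) i \<subseteq> frontier (\<Union>T) \<and>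
        x \<in> convex hull {vtx (VL K) i, vtx (VL K) (Suc i), cB K}} \<le> M"
      using adm unfolding admissible_mesh_def by (elim conjE) assumption
    have F8: "\<forall>K\<in>T. \<forall>i<length (VL K). edge (VL K) i \<subseteq> frontier (\<Union>T) \<longrightarrow>
       (let a = vtx (VL K) i; b = vtx (VL K) (Suc i); he = dist a b;
            \<tau> = (1 / he) *\<^sub>R (b - a) in
        \<exists>\<nu> \<gamma> n. norm \<nu> = 1 \<and> \<nu> \<bullet> \<tau> = 0 \<and> outward_edge_normal K a b n \<and>
          bij_betw (\<lambda>t. a + t *\<^sub>R \<tau> + \<gamma> t *\<^sub>R \<nu>) {0..he} (arcOf (edge (VL K) i)) \<and>
          (\<forall>t\<in>{0..he}. \<bar>\<gamma> t\<bar> \<le> C4 * (mesh_s T VL)\<^sup>2) \<and>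
          (\<forall>t\<in>{0..he}. \<exists>nn. outward_normal \<Omega> (a + t *\<^sub>R \<tau> + \<gamma> t *\<^sub>R \<nu>) nn \<and>
                              norm (n - nn) \<le> C4' * mesh_s T VL))"
      using adm unfolding admissible_mesh_def by (elim conjE) assumption
    have finT: "finite T" by (rule F1)
    have Kpoly: "K = polyreg vs" using F2 KT unfolding vs_def by blast
    have A1: "0 < r" "C1 * hK \<le> r" "ball c r \<subseteq> K"
      using F3 KT unfolding r_def c_def hK_def by blast+
    have A3: "h \<le> C3 * hK" using F4 KT unfolding h_def hK_def by blast
    have hH0: "h \<le> H0" using F5 unfolding h_def .
    have A5: "\<forall>e\<in>mesh_EB T VL. s \<le> C5 * diameter e" using F6 unfolding s_def .
    have Acard: "\<forall>x\<in>K. card {i. i < length vs \<and> edge vs i \<subseteq> frontier (\<Union>T) \<and>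
        x \<in> convex hull {vtx vs i, vtx vs (Suc i), c}} \<le> M"
      using F7 KT unfolding vs_def c_def by blast
    have A4: "\<And>i. i < length vs \<Longrightarrow> edge vs i \<subseteq> frontier (\<Union>T) \<Longrightarrow>
       \<exists>\<nu> \<gamma>. norm \<nu> = 1 \<and> \<nu> \<bullet> ((1 / dist (vtx vs i) (vtx vs (Suc i))) *\<^sub>R (vtx vs (Suc i) - vtx vs i)) = 0 \<and>
          bij_betw (\<lambda>t. vtx vs i + t *\<^sub>R ((1 / dist (vtx vs i) (vtx vs (Suc i))) *\<^sub>R (vtx vs (Suc i) - vtx vs i)) + \<gamma> t *\<^sub>R \<nu>)
             {0..dist (vtx vs i) (vtx vs (Suc i))} (arcOf (edge vs i)) \<and>
          (\<forall>t\<in>{0..dist (vtx vs i) (vtx vs (Suc i))}. \<bar>\<gamma> t\<bar> \<le> C4 * s\<^sup>2)"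
    proof -
      fix i assume i: "i < length vs" "edge vs i \<subseteq> frontier (\<Union>T)"
      have "\<forall>K\<in>T. \<forall>i<length (VL K). edge (VL K) i \<subseteq> frontier (\<Union>T) \<longrightarrow>
       (let a = vtx (VL K) i; b = vtx (VL K) (Suc i); he = dist a b;
            \<tau> = (1 / he) *\<^sub>R (b - a) in
        \<exists>\<nu> \<gamma> n. norm \<nu> = 1 \<and> \<nu> \<bullet> \<tau> = 0 \<and> outward_edge_normal K a b n \<and>
          bij_betw (\<lambda>t. a + t *\<^sub>R \<tau> + \<gamma> t *\<^sub>R \<nu>) {0..he} (arcOf (edge (VL K) i)) \<and>
          (\<forall>t\<in>{0..he}. \<bar>\<gamma> t\<bar> \<le> C4 * (mesh_s T VL)\<^sup>2) \<and>
          (\<forall>t\<in>{0..he}. \<exists>nn. outward_normal \<Omega> (a + t *\<^sub>R \<tau> + \<gamma> t *\<^sub>R \<nu>) nn \<and>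
                              norm (n - nn) \<le> C4' * mesh_s T VL))"
        by (rule F8)
      then have "let a = vtx vs i; b = vtx vs (Suc i); he = dist a b;
            \<tau> = (1 / he) *\<^sub>R (b - a) in
        \<exists>\<nu> \<gamma> n. norm \<nu> = 1 \<and> \<nu> \<bullet> \<tau> = 0 \<and> outward_edge_normal K a b n \<and>
          bij_betw (\<lambda>t. a + t *\<^sub>R \<tau> + \<gamma> t *\<^sub>R \<nu>) {0..he} (arcOf (edge vs i)) \<and>
          (\<forall>t\<in>{0..he}. \<bar>\<gamma> t\<bar> \<le> C4 * s\<^sup>2) \<and>
          (\<forall>t\<in>{0..he}. \<exists>nn. outward_normal \<Omega> (a + t *\<^sub>R \<tau> + \<gamma> t *\<^sub>R \<nu>) nn \<and>
                              norm (n - nn) \<le> C4' * s)"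
        using KT i unfolding vs_def s_def by blast
      then show "\<exists>\<nu> \<gamma>. norm \<nu> = 1 \<and> \<nu> \<bullet> ((1 / dist (vtx vs i) (vtx vs (Suc i))) *\<^sub>R (vtx vs (Suc i) - vtx vs i)) = 0 \<and>
          bij_betw (\<lambda>t. vtx vs i + t *\<^sub>R ((1 / dist (vtx vs i) (vtx vs (Suc i))) *\<^sub>R (vtx vs (Suc i) - vtx vs i)) + \<gamma> t *\<^sub>R \<nu>)
             {0..dist (vtx vs i) (vtx vs (Suc i))} (arcOf (edge vs i)) \<and>
          (\<forall>t\<in>{0..dist (vtx vs i) (vtx vs (Suc i))}. \<bar>\<gamma> t\<bar> \<le> C4 * s\<^sup>2)"
        unfolding Let_def by blast
    qed
    have Kc: "compact K" using Kpoly polyreg_compact by simp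
    have Kb: "bounded K" using Kc compact_imp_bounded by blast
    have cK: "c \<in> K" using A1 by auto
    have hK2r: "2 * r \<le> hK"
      using diameter_subset[OF A1(3) Kb] A1(1) unfolding hK_def by simp
    have hKpos: "0 < hK" using hK2r A1(1) by simp
    have hKh: "hK \<le> h" unfolding hK_def h_def mesh_h_def using finT KT by (intro Max_ge) auto
    have hpos: "0 < h" using hKpos hKh by simp
    have contv2: "continuous_on UNIV (\<lambda>x. (v x)\<^sup>2)" by (intro continuous_intros Pj_cont[OF v])
    have intK: "(\<lambda>x. (v x)\<^sup>2) integrable_on K" by (rule integrable_compact_cont[OF contv2 Kc])
    define IK where "IK = integral K (\<lambda>x. (v x)\<^sup>2)"
    have IK0: "0 \<le> IK" unfolding IK_def by (rule integral_nonneg[OF intK]) simp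
    define l where "l = r/2"
    define \<alpha> where "\<alpha> = (vector[c$1 - r/4, c$2 - r/4] :: real^2)"
    define sq where "sq = cbox \<alpha> (vector[\<alpha>$1+l, \<alpha>$2+l])"
    have lpos: "0 < l" unfolding l_def using A1 by simp
    have sqK: "sq \<subseteq> K"
    proof
      fix z assume "z \<in> sq"
      then have zz: "\<alpha>$1 \<le> z$1" "z$1 \<le> \<alpha>$1 + l" "\<alpha>$2 \<le> z$2" "z$2 \<le> \<alpha>$2 + l"
        unfolding sq_def mem_box_cart forall_2 by auto
      have a1: "\<alpha>$1 = c$1 - r/4" "\<alpha>$2 = c$2 - r/4" by (simp_all add: \<alpha>_def)
      have z: "\<bar>z$1 - c$1\<bar> \<le> r/4" "\<bar>z$2 - c$2\<bar> \<le> r/4"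
        using zz a1 unfolding l_def abs_le_iff by (intro conjI; linarith)+
      have "norm (c - z) \<le> \<bar>(c - z)$1\<bar> + \<bar>(c - z)$2\<bar>"
        using norm_le_l1_cart[of "c - z"] by (simp add: sum_2)
      also have "\<dots> \<le> r/2"
      proof -
        have "\<bar>(c - z)$1\<bar> = \<bar>z$1 - c$1\<bar>" "\<bar>(c - z)$2\<bar> = \<bar>z$2 - c$2\<bar>" by (simp_all add: abs_minus_commute)
        then show ?thesis using z by linarith
      qed
      also have "\<dots> < r" using A1 by simp
      finally show "z \<in> K" using A1(3) by (auto simp: dist_norm)
    qed
    have intsq: "(\<lambda>x. (v x)\<^sup>2) integrable_on sq" unfolding sq_def
      by (rule integrable_continuous, rule continuous_on_subset[OF contv2]) auto
    have Isq: "integral sq (\<lambda>x. (v x)\<^sup>2) \<le> IK"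
      unfolding IK_def by (rule integral_subset_le[OF sqK intsq intK]) simp
    define Sb where "Sb = 4*Cp/r\<^sup>2 * IK"
    have Sb0: "0 \<le> Sb" unfolding Sb_def using Cp IK0 by simp
    have pw: "(v x)\<^sup>2 \<le> Sb" if xn: "norm (x - c) \<le> (2 + E) * hK" for x
    proof -
      have hKr: "hK \<le> r / C1" using A1(2) C1p by (simp add: field_simps mult.commute)
      have Dh: "D * hK \<le> D * (r / C1)" using hKr D0 by (intro mult_left_mono) auto
      have bnd: "\<bar>x$i - \<alpha>$i\<bar> \<le> \<Lambda> * l" for i
      proof -
        have "\<bar>x$i - c$i\<bar> \<le> norm (x - c)" using component_le_norm_cart[of "x - c" i] by simp
        then have xi: "\<bar>x$i - c$i\<bar> \<le> D * hK" using xn unfolding D_def by simp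
        have ai: "\<alpha>$i = c$i - r/4" unfolding \<alpha>_def using exhaust_2[of i] by auto
        have "\<bar>x$i - \<alpha>$i\<bar> \<le> \<bar>x$i - c$i\<bar> + r/4" unfolding ai using A1(1) by linarith
        also have "\<dots> \<le> D * (r / C1) + r/4" using xi Dh by linarith
        also have "\<dots> \<le> \<Lambda> * l" unfolding \<Lambda>_def l_def using A1(1) C1p D0
          by (simp add: field_simps)
        finally show ?thesis .
      qed
      have "(v x)\<^sup>2 \<le> Cp/l\<^sup>2 * integral sq (\<lambda>z. (v z)\<^sup>2)"
        using HP0 v lpos bnd[of 1] bnd[of 2] unfolding sq_def by blast
      also have "\<dots> \<le> Cp/l\<^sup>2 * IK" using Isq Cp lpos by (intro mult_left_mono) auto
      also have "\<dots> = Sb" unfolding Sb_def l_def by (simp add: field_simps power2_eq_square)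
      finally show ?thesis .
    qed
    have finEB: "finite (mesh_EB T VL)" unfolding mesh_EB_def bedges_of_def edges_def
      using finT by auto
    obtain e0 where e0: "e0 \<in> bedges_of T vs" using bne vs_def by blast
    have e0EB: "e0 \<in> mesh_EB T VL" unfolding mesh_EB_def using e0 KT vs_def by blast
    have e0b: "bounded e0" using e0 unfolding bedges_of_def edges_def edge_def by (auto simp: compact_imp_bounded)
    have s0: "0 \<le> s" unfolding s_def mesh_s_def
      using Max_ge[OF finite_imageI[OF finEB] imageI[OF e0EB, of diameter]] diameter_ge_0[OF e0b]
      by linarith
    define bnd where "bnd = Sb * (2 * (C4 * s\<^sup>2) * hK)"
    have ebound: "L2sq v (bounded_region e (arcOf e)) \<le> bnd" if e: "e \<in> bedges_of T vs" for e
    proof -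
      obtain i where i: "i < length vs" "e = edge vs i" and ef: "edge vs i \<subseteq> frontier (\<Union>T)"
        using e unfolding bedges_of_def edges_def by auto
      define a where "a = vtx vs i"
      define b where "b = vtx vs (Suc i)"
      obtain \<nu> \<gamma> where nu: "norm \<nu> = 1" and orth: "\<nu> \<bullet> ((1 / dist a b) *\<^sub>R (b - a)) = 0"
        and bij: "bij_betw (\<lambda>t. a + t *\<^sub>R ((1 / dist a b) *\<^sub>R (b - a)) + \<gamma> t *\<^sub>R \<nu>) {0..dist a b} (arcOf e)"
        and gam: "\<forall>t\<in>{0..dist a b}. \<bar>\<gamma> t\<bar> \<le> C4 * s\<^sup>2"
        using A4[OF i(1) ef] unfolding a_def b_def i(2) by blast
      have aK: "a \<in> K" "b \<in> K" using vtx_in_polyreg[OF i(1)] Kpoly unfolding a_def b_def by auto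
      have eK: "e \<subseteq> K" using edge_sub_polyreg[OF i(1)] Kpoly i(2) by auto
      have hab: "dist a b \<le> hK" unfolding hK_def by (rule diameter_bounded_bound[OF Kb aK])
      have hac: "dist a c \<le> hK" unfolding hK_def by (rule diameter_bounded_bound[OF Kb aK(1) cK])
      have eEB: "e \<in> mesh_EB T VL" unfolding mesh_EB_def using e KT vs_def by blast
      have se: "s \<le> C5 * hK"
      proof -
        have "s \<le> C5 * diameter e" using A5 eEB by blast
        also have "\<dots> \<le> C5 * hK" unfolding hK_def using diameter_subset[OF eK Kb] C5p by simp
        finally show ?thesis .
      qed
      have dE: "C4 * s\<^sup>2 \<le> E * hK"
      proof -
        have "s\<^sup>2 \<le> (C5 * hK)\<^sup>2" using se s0 by (intro power_mono) auto
        also have "\<dots> = C5^2 * hK * hK" by (simp add: power2_eq_square)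
        also have "\<dots> \<le> C5^2 * H0 * hK" using hKh hH0 hKpos
          by (intro mult_right_mono mult_left_mono) auto
        finally have "s\<^sup>2 \<le> C5^2 * H0 * hK" .
        then have "C4 * s\<^sup>2 \<le> C4 * (C5^2 * H0 * hK)" using C4p by (intro mult_left_mono) auto
        then show ?thesis unfolding E_def by (simp add: mult_ac)
      qed
      have "integral (bounded_region (closed_segment a b) (arcOf e)) (\<lambda>x. (v x)\<^sup>2) \<le> Sb * (2*(C4 * s\<^sup>2)*dist a b)"
        by (rule edge_bound[OF v Kc aK(1) cK nu orth bij gam _ hab hac dE pw Sb0]) (use C4p in simp)
      also have "\<dots> \<le> bnd" unfolding bnd_def using hab Sb0 C4p
        by (intro mult_left_mono mult_left_mono[where c="2 * (C4 * s\<^sup>2)"]) auto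
      finally show ?thesis unfolding L2sq_def i(2) edge_def a_def b_def .
    qed
    have cardB: "card (bedges_of T vs) \<le> M"
    proof -
      define I where "I = {i. i < length vs \<and> edge vs i \<subseteq> frontier (\<Union>T) \<and>
        c \<in> convex hull {vtx vs i, vtx vs (Suc i), c}}"
      have "bedges_of T vs \<subseteq> edge vs ` I"
        unfolding bedges_of_def edges_def I_def by (auto intro: hull_inc)
      then have "card (bedges_of T vs) \<le> card (edge vs ` I)"
        by (rule card_mono[rotated]) (simp add: I_def)
      also have "\<dots> \<le> card I" by (rule card_image_le) (simp add: I_def)
      also have "\<dots> \<le> M" using Acard cK unfolding I_def by blast
      finally show ?thesis .
    qed
    have bnd0: "0 \<le> bnd" unfolding bnd_def using Sb0 C4p hKpos by simp
    have "(\<Sum>e\<in>bedges_of T (VL K). L2sq v (bounded_region e (arcOf e))) \<le> (\<Sum>e\<in>bedges_of T vs. bnd)"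
      unfolding vs_def[symmetric] by (rule sum_mono) (rule ebound)
    also have "\<dots> = real (card (bedges_of T vs)) * bnd" by simp
    also have "\<dots> \<le> real M * bnd" using cardB bnd0 by (intro mult_right_mono) auto
    also have "\<dots> \<le> Cf * s\<^sup>2 / h * IK"
    proof -
      have r2: "(C1 * hK)\<^sup>2 \<le> r\<^sup>2" using A1 C1p hKpos by (intro power_mono) auto
      have "bnd = 8 * C4 * Cp * s\<^sup>2 * IK * (hK / r\<^sup>2)" unfolding bnd_def Sb_def by (simp add: field_simps)
      also have "hK / r\<^sup>2 \<le> hK / (C1 * hK)\<^sup>2"
        using r2 hKpos C1p A1(1) by (intro divide_left_mono) (auto intro!: mult_pos_pos)
      also have "hK / (C1 * hK)\<^sup>2 = 1 / (C1\<^sup>2 * hK)" using hKpos by (simp add: power2_eq_square field_simps)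
      also have "1 / (C1\<^sup>2 * hK) \<le> C3 / (C1\<^sup>2 * h)"
        using A3 hKpos hpos C1p C3p by (simp add: field_simps)
      finally have "bnd \<le> 8 * C4 * Cp * s\<^sup>2 * IK * (C3 / (C1\<^sup>2 * h))"
        using C4p Cp IK0 by (simp add: mult_left_mono)
      then have "real M * bnd \<le> real M * (8 * C4 * Cp * s\<^sup>2 * IK * (C3 / (C1\<^sup>2 * h)))"
        by (intro mult_left_mono) auto
      also have "\<dots> = Cf * s\<^sup>2 / h * IK" unfolding Cf_def by (simp add: field_simps)
      finally show ?thesis .
    qed
    finally show "(\<Sum>e\<in>bedges_of T (VL K). L2sq v (bounded_region e (arcOf e))) \<le> Cf * (mesh_s T VL)\<^sup>2 / mesh_h T * L2sq v K"
      unfolding s_def h_def IK_def L2sq_def .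
  qed
qed

end
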